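(* Let $R$ be a ring with unity and involution $*$, and let $a\in R$. The following statements are equivalent. (1) $a$ is Moore-Penrose invertible. (2) $a$ is left dual $a^*$-core invertible. (3) $a^*$ is left dual $a$-core invertible. (4) $a$ is left dual $(a^*,a^* )$-core invertible. (5) $a$ is left $(a^*,a^* )$-invertible. (6) $a^*$ is left dual $(a,a)$-core invertible. (7) $a^*$ is left $(a,a)$-invertible.
   Context: $a$ is Moore-Penrose invertible if there exists $x\in R$ with $axa=a$, $xax=x$, $(ax)^*=ax$, $(xa)^*=xa$. For $u,v\in R$, $u$ is left dual $v$-core invertible if there exists $x\in R$ with $uxvu=u$, $(xvu)^*=xvu$ and $x^2vu=x$. For $u,b,c\in R$, $u$ is left dual $(b,c)$-core invertible if there exists $x\in Rc$ with $bxub=b$ and $(xub)^*=xub$; and $u$ is left $(b,c)$-invertible if $b\in Rcub$ (equivalently, there exists $x\in Rc$ with $xub=b$). *)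

theory Defs
  imports Main
begin

definition involution :: "('a::ring_1 \<Rightarrow> 'a) \<Rightarrow> bool" where
  "involution star \<longleftrightarrow>
     (\<forall>x y. star (x + y) = star x + star y) \<and>
     (\<forall>x y. star (x * y) = star y * star x) \<and>
     (\<forall>x. star (star x) = x)"

definition MP_invertible :: "('a::ring_1 \<Rightarrow> 'a) \<Rightarrow> 'a \<Rightarrow> bool" where
  "MP_invertible star a \<longleftrightarrow>
     (\<exists>x. a * x * a = a \<and> x * a * x = x \<and> star (a * x) = a * x \<and> star (x * a) = x * a)"

definition left_dual_core_invertible :: "('a::ring_1 \<Rightarrow> 'a) \<Rightarrow> 'a \<Rightarrow> 'a \<Rightarrow> bool" where
  "left_dual_core_invertible star u v \<longleftrightarrow>
     (\<exists>x. u * x * v * u = u \<and> star (x * v * u) = x * v * u \<and> x ^ 2 * v * u = x)"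

definition left_dual_bc_core_invertible :: "('a::ring_1 \<Rightarrow> 'a) \<Rightarrow> 'a \<Rightarrow> 'a \<Rightarrow> 'a \<Rightarrow> bool" where
  "left_dual_bc_core_invertible star u b c \<longleftrightarrow>
     (\<exists>x. (\<exists>r. x = r * c) \<and> b * x * u * b = b \<and> star (x * u * b) = x * u * b)"

definition left_bc_invertible :: "'a::ring_1 \<Rightarrow> 'a \<Rightarrow> 'a \<Rightarrow> bool" where
  "left_bc_invertible u b c \<longleftrightarrow> (\<exists>r. b = r * c * u * b)"

end

theory Submission
  imports Defs
begin

lemma inv_mult: "involution star \<Longrightarrow> star (x * y) = star y * star x"
  by (simp add: involution_def)
lemma inv_inv: "involution star \<Longrightarrow> star (star x) = x"
  by (simp add: involution_def)

lemma star4: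
  assumes inv: "involution star"
  shows "star (p * q * r * t) = star t * star r * star q * star p"
  using inv_mult[OF inv] by (simp add: mult.assoc)

lemma key1:
  assumes inv: "involution star" and h1: "u * x * v * u = u"
    and h2: "star (x * v * u) = x * v * u"
  shows "u = u * star u * star v * star x"
proof -
  have "u = u * (x * v * u)" using h1 by (simp add: mult.assoc)
  also have "\<dots> = u * star (x * v * u)" using h2 by simp
  also have "\<dots> = u * star u * star v * star x"
    using inv_mult[OF inv] by (simp add: mult.assoc)
  finally show ?thesis .
qed

lemma MP_weak:
  assumes inv: "involution star" and h1: "a * x * a = a"
    and h2: "star (a * x) = a * x" and h3: "star (x * a) = x * a"
  shows "MP_invertible star a"
proof -
  let ?y = "x * a * x"
  have h1': "a * (x * (a * z)) = a * z" for z
    using h1 by (metis mult.assoc)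
  have e1: "a * ?y * a = a" using h1 by (simp add: mult.assoc)
  have e2: "?y * a * ?y = ?y" using h1' by (simp add: mult.assoc)
  have ax: "a * ?y = (a * x) * (a * x)" by (simp add: mult.assoc)
  have xa: "?y * a = (x * a) * (x * a)" by (simp add: mult.assoc)
  have e3: "star (a * ?y) = a * ?y" unfolding ax by (subst inv_mult[OF inv]) (simp only: h2)
  have e4: "star (?y * a) = ?y * a" unfolding xa by (subst inv_mult[OF inv]) (simp only: h3)
  show ?thesis unfolding MP_invertible_def using e1 e2 e3 e4 by blast
qed

lemma L:
  assumes inv: "involution star" and h: "a = a * star a * a * s"
  shows "MP_invertible star a"
proof -
  note m = inv_mult[OF inv] and ii = inv_inv[OF inv]
  define b where "b = star a * a"
  have bs: "star b = b" unfolding b_def using m ii by simp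
  have hb: "a * (b * s) = a" using h unfolding b_def by (simp add: mult.assoc)
  have b1: "b * (b * s) = b"
  proof -
    have "b * (b * s) = star a * (a * (b * s))" by (simp add: b_def mult.assoc)
    also have "\<dots> = b" using hb by (simp add: b_def)
    finally show ?thesis .
  qed
  have b2: "star s * b * b = b"
  proof -
    have "star (b * (b * s)) = star s * b * b" using m bs by (simp add: mult.assoc)
    then show ?thesis using b1 bs by simp
  qed
  have c: "star s * b = b * s"
  proof -
    have "star s * b = star s * (b * (b * s))" using b1 by simp
    also have "\<dots> = (star s * b * b) * s" by (simp add: mult.assoc)
    also have "\<dots> = b * s" using b2 by simp
    finally show ?thesis .
  qed
  define g where "g = star s * b * s"
  have gs: "star g = g" unfolding g_def using m ii bs by (simp add: mult.assoc)
  have gb: "g * b = star s * b"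
  proof -
    have "g * b = star s * (b * s) * b" by (simp add: g_def mult.assoc)
    also have "\<dots> = star s * (star s * b * b)" using c by (simp add: mult.assoc)
    also have "\<dots> = star s * b" using b2 by simp
    finally show ?thesis .
  qed
  define x where "x = g * star a"
  have xa: "x * a = b * s" unfolding x_def using gb c b_def by (simp add: mult.assoc)
  have xas: "star (x * a) = x * a" unfolding xa using m ii bs c by simp
  have axa: "a * x * a = a" using xa hb by (simp add: mult.assoc)
  have axs: "star (a * x) = a * x" unfolding x_def using m ii gs by (simp add: mult.assoc)
  show ?thesis using MP_weak[OF inv axa axs xas] .
qed

lemma MP_star:
  assumes inv: "involution star" and h: "MP_invertible star (star a)"
  shows "MP_invertible star a"
proof -
  note m = inv_mult[OF inv] and ii = inv_inv[OF inv]
  obtain y where y: "star a * y * star a = star a" "y * star a * y = y"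
    "star (star a * y) = star a * y" "star (y * star a) = y * star a"
    using h unfolding MP_invertible_def by blast
  have s3: "star (p * q * r) = star r * star q * star p" for p q r
    using m by (simp add: mult.assoc)
  have "a * star y * a = a"
    using arg_cong[OF y(1), of star] by (simp only: s3 ii)
  moreover have "star y * a * star y = star y"
    using arg_cong[OF y(2), of star] by (simp only: s3 ii)
  moreover have "star (a * star y) = a * star y"
    using arg_cong[OF y(4), of star] by (simp only: m ii)
  moreover have "star (star y * a) = star y * a"
    using arg_cong[OF y(3), of star] by (simp only: m ii)
  ultimately show ?thesis unfolding MP_invertible_def by blast
qed

lemma MP_fwd:
  assumes inv: "involution star" and h: "MP_invertible star a"
  shows "left_dual_core_invertible star a (star a)"
    and "left_dual_bc_core_invertible star (star a) a a"
    and "\<exists>s. a = a * star a * a * s"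
proof -
  note m = inv_mult[OF inv] and ii = inv_inv[OF inv]
  obtain y where y: "a * y * a = a" "y * a * y = y"
    "star (a * y) = a * y" "star (y * a) = y * a"
    using h unfolding MP_invertible_def by blast
  define x where "x = y * star y"
  have ya: "star y * star a = a * y" using y(3) m by simp
  have xa: "x * star a * a = y * a" unfolding x_def
    using ya y(1) by (simp add: mult.assoc)
  have ysy: "star y * y * a = star y"
  proof -
    have "star y * y * a = star y * star (y * a)" using y(4) by (simp add: mult.assoc)
    also have "\<dots> = star (y * a * y)" using m by (simp add: mult.assoc)
    also have "\<dots> = star y" using y(2) by simp
    finally show ?thesis .
  qed
  have c1: "a * x * star a * a = a" using xa y(1) by (simp add: mult.assoc)
  have c2: "star (x * star a * a) = x * star a * a" using xa y(4) by simp
  have c3: "x ^ 2 * star a * a = x"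
  proof -
    have "x ^ 2 * star a * a = x * (x * star a * a)"
      by (simp add: power2_eq_square mult.assoc)
    also have "\<dots> = x * (y * a)" by (simp only: xa)
    also have "\<dots> = y * (star y * y * a)" by (simp add: x_def mult.assoc)
    also have "\<dots> = x" by (simp add: ysy x_def)
    finally show ?thesis .
  qed
  have c4: "x = (y * star y * y) * a" unfolding x_def using ysy by (simp add: mult.assoc)
  show "left_dual_core_invertible star a (star a)"
    unfolding left_dual_core_invertible_def using c1 c2 c3 by blast
  show "left_dual_bc_core_invertible star (star a) a a"
    unfolding left_dual_bc_core_invertible_def using c1 c2 c4 by blast
  show "\<exists>s. a = a * star a * a * s" using key1[OF inv c1 c2] ii by auto
qed

theorem theorem3p10:
  fixes star :: "'a::ring_1 \<Rightarrow> 'a" and a :: 'a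
  assumes "involution star"
  shows "(MP_invertible star a \<longleftrightarrow> left_dual_core_invertible star a (star a))
       \<and> (MP_invertible star a \<longleftrightarrow> left_dual_core_invertible star (star a) a)
       \<and> (MP_invertible star a \<longleftrightarrow> left_dual_bc_core_invertible star a (star a) (star a))
       \<and> (MP_invertible star a \<longleftrightarrow> left_bc_invertible a (star a) (star a))
       \<and> (MP_invertible star a \<longleftrightarrow> left_dual_bc_core_invertible star (star a) a a)
       \<and> (MP_invertible star a \<longleftrightarrow> left_bc_invertible (star a) a a)"
proof -
  note inv = assms
  note m = inv_mult[OF inv] and ii = inv_inv[OF inv]
  have A1: "MP_invertible star a \<Longrightarrow> MP_invertible star (star a)"
    using MP_star[OF inv, of "star a"] ii by simp
  have A2: "MP_invertible star (star a) \<Longrightarrow> MP_invertible star a"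
    using MP_star[OF inv] .
  have La: "MP_invertible star a" if "a = a * star a * a * s" for s
    using L[OF inv that] .
  have Lb: "MP_invertible star a" if "star a = star a * a * star a * s" for s
  proof -
    have "star a = star a * star (star a) * star a * s" using that ii by simp
    then show ?thesis using L[OF inv, of "star a" s] A2 by blast
  qed
  have F1: "left_dual_core_invertible star a (star a)"
       "left_dual_bc_core_invertible star (star a) a a"
       "\<exists>s. a = a * star a * a * s" if "MP_invertible star a"
    using MP_fwd[OF inv that] by auto
  have F2: "left_dual_core_invertible star (star a) a"
       "left_dual_bc_core_invertible star a (star a) (star a)"
       "\<exists>s. star a = star a * a * star a * s" if "MP_invertible star a"
    using MP_fwd[OF inv A1[OF that]] ii by auto
  have R2: "MP_invertible star a" if H: "left_dual_core_invertible star a (star a)"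
  proof -
    obtain x where "a * x * star a * a = a" "star (x * star a * a) = x * star a * a"
      using H unfolding left_dual_core_invertible_def by blast
    from key1[OF inv this] have "a = a * star a * a * star x" using ii by simp
    then show ?thesis by (rule La)
  qed
  have R3: "MP_invertible star a" if H: "left_dual_core_invertible star (star a) a"
  proof -
    obtain x where "star a * x * a * star a = star a" "star (x * a * star a) = x * a * star a"
      using H unfolding left_dual_core_invertible_def by blast
    from key1[OF inv this] have "star a = star a * a * star a * star x" using ii by simp
    then show ?thesis by (rule Lb)
  qed
  have R4: "MP_invertible star a" if H: "left_dual_bc_core_invertible star a (star a) (star a)"
  proof -
    obtain x where "star a * x * a * star a = star a" "star (x * a * star a) = x * a * star a"
      using H unfolding left_dual_bc_core_invertible_def by blast
    from key1[OF inv this] have "star a = star a * a * star a * star x" using ii by simp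
    then show ?thesis by (rule Lb)
  qed
  have R6: "MP_invertible star a" if H: "left_dual_bc_core_invertible star (star a) a a"
  proof -
    obtain x where "a * x * star a * a = a" "star (x * star a * a) = x * star a * a"
      using H unfolding left_dual_bc_core_invertible_def by blast
    from key1[OF inv this] have "a = a * star a * a * star x" using ii by simp
    then show ?thesis by (rule La)
  qed
  have R5: "MP_invertible star a" if H: "left_bc_invertible a (star a) (star a)"
  proof -
    obtain r where "star a = r * star a * a * star a"
      using H unfolding left_bc_invertible_def by blast
    then have "star (star a) = star (r * star a * a * star a)" by simp
    then have "a = a * star a * a * star r" by (simp only: star4[OF inv] ii)
    then show ?thesis by (rule La)
  qed
  have R7: "MP_invertible star a" if H: "left_bc_invertible (star a) a a"
  proof -
    obtain r where "a = r * a * star a * a"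
      using H unfolding left_bc_invertible_def by blast
    then have "star a = star (r * a * star a * a)" by simp
    then have "star a = star a * a * star a * star r" by (simp only: star4[OF inv] ii)
    then show ?thesis by (rule Lb)
  qed
  have F5: "left_bc_invertible a (star a) (star a)" if H: "MP_invertible star a"
  proof -
    obtain s where "a = a * star a * a * s" using F1(3)[OF H] by blast
    then have "star a = star (a * star a * a * s)" by simp
    then have "star a = star s * star a * a * star a" by (simp only: star4[OF inv] ii)
    then show ?thesis unfolding left_bc_invertible_def by blast
  qed
  have F7: "left_bc_invertible (star a) a a" if H: "MP_invertible star a"
  proof -
    obtain s where "star a = star a * a * star a * s" using F2(3)[OF H] by blast
    then have "star (star a) = star (star a * a * star a * s)" by simp
    then have "a = star s * a * star a * a" by (simp only: star4[OF inv] ii)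
    then show ?thesis unfolding left_bc_invertible_def by blast
  qed
  show ?thesis using F1 F2 F5 F7 R2 R3 R4 R5 R6 R7 by blast
qed

end
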